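(* Let $\mathsf{S}^2(\mathbb{C}^n)$ be the space of $n\times n$ complex symmetric matrices and $\mu_s\in\mathsf{S}^2(\mathbb{C}^n)^*\otimes(\mathbb{C}^n)^*\otimes\mathbb{C}^n$ the structure tensor of the symmetric matrix-vector product $(A,v)\mapsto Av$. Then $\operatorname{rank}(\mu_s)=n(n+1)/2$.
   Context: Structure tensor of a bilinear map $\beta:U\times V\to W$: the unique $\mu_\beta\in U^*\otimes V^*\otimes W$ with $\beta(u,v)=\mu_\beta(u,v,\cdot)$. Rank: least number of decomposable tensors $u^*\otimes v^*\otimes w$ summing to the tensor. *)

theory Defs
  imports "HOL-Analysis.Analysis"
begin

definition sym_matrices :: "(complex^'n^'n) set" where
  "sym_matrices = {A. transpose A = A}"

text \<open>A complex-linear functional on complex^'n^'m is given by a coefficient array a,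
  acting as u |-> sum_{j,k} a_jk u_jk; on complex^'p by a coefficient vector b.
  (Every linear functional on a subspace U extends to the ambient space, so restricting
  such functionals to U gives exactly the dual space of U.)\<close>
definition mat_functional :: "complex^'n^'m \<Rightarrow> complex^'n^'m \<Rightarrow> complex" where
  "mat_functional a u = (\<Sum>j\<in>UNIV. \<Sum>k\<in>UNIV. a $ j $ k * u $ j $ k)"

definition vec_functional :: "complex^'p \<Rightarrow> complex^'p \<Rightarrow> complex" where
  "vec_functional b v = (\<Sum>l\<in>UNIV. b $ l * v $ l)"

definition tensor_decomp :: "(complex^'n^'m) set \<Rightarrow> (complex^'p) set
    \<Rightarrow> (complex^'n^'m \<Rightarrow> complex^'p \<Rightarrow> complex^'q) \<Rightarrow> nat \<Rightarrow> bool" where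
  "tensor_decomp U V f r \<longleftrightarrow>
     (\<exists>a b w. \<forall>u\<in>U. \<forall>v\<in>V.
        f u v = (\<Sum>i<r. (mat_functional (a i) u * vec_functional (b i) v) *s w i))"

definition tensor_rank :: "(complex^'n^'m) set \<Rightarrow> (complex^'p) set
    \<Rightarrow> (complex^'n^'m \<Rightarrow> complex^'p \<Rightarrow> complex^'q) \<Rightarrow> nat" where
  "tensor_rank U V f = (LEAST r. tensor_decomp U V f r)"

end

theory Submission
  imports Defs
begin

definition Pset :: "'n set set" where "Pset = {S. \<exists>l m. S = {l,m}}"

lemma finite_Pset: "finite (Pset :: 'n::finite set set)"
  by simp

lemma card_Pset: "card (Pset :: 'n::finite set set) = CARD('n) * (CARD('n) + 1) div 2"
proof -
  have eq: "(Pset :: 'n set set) = {S. S \<subseteq> UNIV \<and> card S = 1} \<union> {S. S \<subseteq> UNIV \<and> card S = 2}"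
    unfolding Pset_def by (auto simp: card_1_singleton_iff card_2_iff)
  have "card (Pset :: 'n set set) = card {S::'n set. S \<subseteq> UNIV \<and> card S = 1} + card {S::'n set. S \<subseteq> UNIV \<and> card S = 2}"
    unfolding eq by (rule card_Un_disjoint) auto
  also have "\<dots> = (CARD('n) choose 1) + (CARD('n) choose 2)"
    by (simp only: n_subsets[OF finite_class.finite_UNIV])
  also have "\<dots> = CARD('n) + CARD('n) * (CARD('n) - 1) div 2"
    by (simp add: choose_two)
  also have "\<dots> = CARD('n) * (CARD('n) + 1) div 2"
  proof -
    define n where "n = CARD('n)"
    have "n * (n + 1) = n * (n - 1) + 2 * n" by (cases n) auto
    then show ?thesis unfolding n_def[symmetric] by simp
  qed
  finally show ?thesis .
qed

lemma sum_if_out: "(\<Sum>k\<in>A. if P then g k else 0) = (if P then sum g A else 0)"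
  by simp

lemma sum_times_delta: "(\<Sum>j\<in>UNIV. f j * (if j = m then 1 else 0)) = (f (m::'a::finite) :: 'b::semiring_1)"
proof -
  have "(\<lambda>j. f j * (if j = m then 1 else 0)) = (\<lambda>j. if j = m then f m else 0)" by auto
  then show ?thesis by (simp only:) simp
qed

definition coefP :: "'n set \<Rightarrow> complex^'n^'n" where
  "coefP S = (\<chi> p q. if card S = 2 then (if p \<in> S \<and> q \<in> S \<and> p \<noteq> q then 1/2 else 0)
                     else (if p \<in> S then (if q \<in> S then 1 else -1) else 0))"

definition indP :: "'n set \<Rightarrow> complex^'n" where
  "indP S = (\<chi> m. if m \<in> S then 1 else 0)"

lemma mf_pair:
  fixes A :: "complex^'n::finite^'n"
  assumes sym: "\<And>i j. A $ i $ j = A $ j $ i" and lm: "l \<noteq> m"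
  shows "mat_functional (coefP {l,m}) A = A $ l $ m"
proof -
  have c: "card {l,m} = 2" using lm by simp
  have e: "\<And>p q. (if p \<in> {l,m} \<and> q \<in> {l,m} \<and> p \<noteq> q then (1/2::complex) else 0) * A $ p $ q
     = (if p = l then (if q = m then A $ l $ m / 2 else 0) else 0)
       + (if p = m then (if q = l then A $ m $ l / 2 else 0) else 0)"
    using lm by auto
  have cf: "\<And>p q. coefP {l,m} $ p $ q = (if p \<in> {l,m} \<and> q \<in> {l,m} \<and> p \<noteq> q then (1/2::complex) else 0)"
    using c unfolding coefP_def by simp
  have "mat_functional (coefP {l,m}) A = (\<Sum>p\<in>UNIV. \<Sum>q\<in>UNIV. (if p = l then (if q = m then A $ l $ m / 2 else 0) else 0)
       + (if p = m then (if q = l then A $ m $ l / 2 else 0) else 0))"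
    unfolding mat_functional_def cf e ..
  also have "\<dots> = A $ l $ m / 2 + A $ m $ l / 2"
    by (simp add: sum.distrib sum_if_out)
  finally show ?thesis using sym[of m l] by simp
qed

lemma mf_single:
  fixes A :: "complex^'n::finite^'n"
  shows "mat_functional (coefP {l}) A = A $ l $ l - (\<Sum>q\<in>UNIV-{l}. A $ l $ q)"
proof -
  have c: "card {l} \<noteq> 2" by simp
  have e: "\<And>p q. (if p \<in> {l} then (if q \<in> {l} then 1 else -1) else (0::complex)) * A $ p $ q
     = (if p = l then (if q = l then A $ l $ l else - A $ l $ q) else 0)"
    by auto
  have rem: "(\<Sum>q\<in>UNIV. (if q = l then A $ l $ l else - A $ l $ q)) = A $ l $ l + (\<Sum>q\<in>UNIV-{l}. - A $ l $ q)"
    by (subst sum.remove[of UNIV l]) auto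
  have cf: "\<And>p q. coefP {l} $ p $ q = (if p \<in> {l} then (if q \<in> {l} then 1 else -1) else (0::complex))"
    using c unfolding coefP_def by simp
  have "mat_functional (coefP {l}) A = (\<Sum>p\<in>UNIV. \<Sum>q\<in>UNIV. (if p = l then (if q = l then A $ l $ l else - A $ l $ q) else 0))"
    unfolding mat_functional_def cf e ..
  also have "\<dots> = (\<Sum>q\<in>UNIV. (if q = l then A $ l $ l else - A $ l $ q))"
    by (simp add: sum_if_out)
  finally show ?thesis using rem by (simp add: sum_negf)
qed

lemma vf_pair:
  fixes v :: "complex^'n::finite"
  assumes "l \<noteq> m"
  shows "vec_functional (indP {l,m}) v = v $ l + v $ m"
proof -
  have e: "\<And>q. (if q \<in> {l,m} then 1 else 0) * v $ q = (if q = l then v $ l else 0) + (if q = m then v $ m else 0)"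
    using assms by auto
  show ?thesis unfolding vec_functional_def indP_def
    by (simp only: vec_lambda_beta e sum.distrib sum.delta finite_class.finite_UNIV UNIV_I if_True)
qed

lemma vf_single:
  fixes v :: "complex^'n::finite"
  shows "vec_functional (indP {l}) v = v $ l"
proof -
  have e: "\<And>q. (if q \<in> {l} then 1 else 0) * v $ q = (if q = l then v $ l else 0)"
    by auto
  show ?thesis unfolding vec_functional_def indP_def
    by (simp only: vec_lambda_beta e sum.delta finite_class.finite_UNIV UNIV_I if_True)
qed


lemma coord_eq:
  fixes A :: "complex^'n::finite^'n" and v :: "complex^'n"
  assumes sym: "\<And>i j. A $ i $ j = A $ j $ i"
  shows "(\<Sum>S\<in>Pset. (mat_functional (coefP S) A * vec_functional (indP S) v) *s indP S) $ l = (A *v v) $ l"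
proof -
  define G where "G S = mat_functional (coefP S) A * vec_functional (indP S) v" for S
  have "(\<Sum>S\<in>Pset. (mat_functional (coefP S) A * vec_functional (indP S) v) *s indP S) $ l
      = (\<Sum>S\<in>Pset. if l \<in> S then G S else 0)"
    unfolding sum_component vector_smult_component G_def indP_def by (intro sum.cong) auto
  also have "\<dots> = sum G {S\<in>Pset. l \<in> S}"
    by (rule sum.inter_filter[symmetric]) simp
  also have "{S\<in>Pset. l \<in> S} = (\<lambda>m. {l,m}) ` UNIV"
    unfolding Pset_def by auto
  also have "sum G ((\<lambda>m. {l,m}) ` UNIV) = (\<Sum>m\<in>UNIV. G {l,m})"
    by (subst sum.reindex) (auto simp: inj_on_def doubleton_eq_iff)
  also have "\<dots> = G {l} + (\<Sum>m\<in>UNIV-{l}. G {l,m})"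
    by (subst sum.remove[of UNIV l]) auto
  also have "(\<Sum>m\<in>UNIV-{l}. G {l,m}) = (\<Sum>m\<in>UNIV-{l}. A $ l $ m * v $ l + A $ l $ m * v $ m)"
    by (intro sum.cong refl) (auto simp: G_def mf_pair[OF sym] vf_pair algebra_simps)
  also have "G {l} = (A $ l $ l - (\<Sum>q\<in>UNIV-{l}. A $ l $ q)) * v $ l"
    by (simp add: G_def mf_single vf_single)
  also have "(A $ l $ l - (\<Sum>q\<in>UNIV-{l}. A $ l $ q)) * v $ l + (\<Sum>m\<in>UNIV-{l}. A $ l $ m * v $ l + A $ l $ m * v $ m)
      = A $ l $ l * v $ l + (\<Sum>m\<in>UNIV-{l}. A $ l $ m * v $ m)"
    by (simp add: sum.distrib sum_distrib_left algebra_simps)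
  also have "\<dots> = (\<Sum>m\<in>UNIV. A $ l $ m * v $ m)"
    by (subst sum.remove[of UNIV l]) auto
  also have "\<dots> = (A *v v) $ l"
    by (simp add: matrix_vector_mult_def)
  finally show ?thesis .
qed

lemma upper: "tensor_decomp (sym_matrices :: (complex^'n::finite^'n) set) UNIV (\<lambda>A v. A *v v) (card (Pset :: 'n set set))"
proof -
  obtain h where h: "bij_betw h {0..<card (Pset :: 'n set set)} (Pset :: 'n set set)"
    using ex_bij_betw_nat_finite[of "Pset :: 'n set set"] by auto
  show ?thesis unfolding tensor_decomp_def
  proof (intro exI ballI)
    fix A :: "complex^'n^'n" and v :: "complex^'n"
    assume "A \<in> sym_matrices"
    then have "transpose A = A" by (simp add: sym_matrices_def)
    then have sym: "\<And>i j. A $ i $ j = A $ j $ i"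
      by (metis transpose_def vec_lambda_beta)
    have "(\<Sum>i<card (Pset :: 'n set set). (mat_functional (coefP (h i)) A * vec_functional (indP (h i)) v) *s indP (h i))
        = (\<Sum>S\<in>Pset. (mat_functional (coefP S) A * vec_functional (indP S) v) *s indP S)"
      unfolding lessThan_atLeast0 by (rule sum.reindex_bij_betw[OF h])
    also have "\<dots> = A *v v"
      using coord_eq[OF sym] by (simp only: vec_eq_iff) blast
    finally show "A *v v = (\<Sum>i<card (Pset :: 'n set set). (mat_functional ((coefP \<circ> h) i) A * vec_functional ((indP \<circ> h) i) v) *s (indP \<circ> h) i)"
      by simp
  qed
qed


lemma re_im_combine: "(Re c *\<^sub>R x) + (Im c *\<^sub>R (\<i> * x)) = c * (x::complex)"
  by (simp add: complex_eq_iff scaleR_conv_of_real)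

definition Emat :: "'n set \<Rightarrow> complex^'n^'n" where
  "Emat S = (\<chi> p q. if {p,q} = S then 1 else 0)"

definition Gmat :: "'n set \<times> bool \<Rightarrow> complex^'n^'n" where
  "Gmat x = (\<chi> p q. if {p,q} = fst x then (if snd x then \<i> else 1) else 0)"

lemma Gmat_entry: "Gmat (S,c) $ p $ q = (if {p,q} = S then (if c then \<i> else 1) else 0)"
  by (simp add: Gmat_def)

lemma Gmat_sym: "Gmat x \<in> sym_matrices"
  unfolding sym_matrices_def by (simp add: vec_eq_iff transpose_def Gmat_def insert_commute)

lemma Gmat_inj: "inj_on Gmat ((Pset :: 'n::finite set set) \<times> UNIV)"
proof (rule inj_onI)
  fix x y :: "'n set \<times> bool"
  assume x: "x \<in> Pset \<times> UNIV" and "y \<in> Pset \<times> UNIV" and eq: "Gmat x = Gmat y"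
  obtain S c where xe: "x = (S,c)" by (cases x)
  obtain S' c' where ye: "y = (S',c')" by (cases y)
  from x xe obtain l m where S: "S = {l,m}" unfolding Pset_def by auto
  have "Gmat (S,c) $ l $ m = Gmat (S',c') $ l $ m" using eq xe ye by simp
  then have "(if c then \<i> else 1) = (if {l,m} = S' then (if c' then \<i> else 1) else 0)"
    by (simp add: Gmat_entry S)
  then show "x = y" using xe ye S
    by (auto split: if_splits simp: complex_eq_iff)
qed

lemma Gmat_indep: "independent (Gmat ` ((Pset :: 'n::finite set set) \<times> UNIV))"
proof (rule notI)
  let ?T = "Gmat ` ((Pset :: 'n set set) \<times> UNIV)"
  assume "dependent ?T"
  moreover have fin: "finite ?T" by simp
  ultimately obtain u where u: "\<exists>v\<in>?T. u v \<noteq> 0" "(\<Sum>v\<in>?T. u v *\<^sub>R v) = 0"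
    using real_vector.dependent_finite by blast
  from u(1) obtain S c where Sc: "(S,c) \<in> Pset \<times> UNIV" "u (Gmat (S,c)) \<noteq> 0" by auto
  then obtain l m where S: "S = {l,m}" unfolding Pset_def by auto
  have "0 = (\<Sum>v\<in>?T. u v *\<^sub>R v) $ l $ m" using u(2) by simp
  also have "\<dots> = (\<Sum>v\<in>?T. of_real (u v) * v $ l $ m)"
    by (simp only: sum_component vector_scaleR_component) (simp add: scaleR_conv_of_real)
  also have "\<dots> = (\<Sum>y\<in>Pset \<times> UNIV. of_real (u (Gmat y)) * Gmat y $ l $ m)"
    by (subst sum.reindex[OF Gmat_inj]) simp
  also have "\<dots> = (\<Sum>S'\<in>Pset. \<Sum>c'\<in>UNIV. of_real (u (Gmat (S',c'))) * Gmat (S',c') $ l $ m)"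
    by (subst sum.cartesian_product) (simp add: case_prod_unfold)
  also have "\<dots> = (\<Sum>S'\<in>Pset. if S' = {l,m} then of_real (u (Gmat (S',False))) + of_real (u (Gmat (S',True))) * \<i> else 0)"
    by (intro sum.cong refl) (auto simp: UNIV_bool Gmat_entry)
  also have "\<dots> = of_real (u (Gmat ({l,m},False))) + of_real (u (Gmat ({l,m},True))) * \<i>"
    using Sc S by (simp add: sum.delta)
  finally have "of_real (u (Gmat ({l,m},False))) + of_real (u (Gmat ({l,m},True))) * \<i> = (0::complex)" by simp
  then have "u (Gmat ({l,m},False)) = 0" "u (Gmat ({l,m},True)) = 0"
    by (simp_all add: complex_eq_iff)
  with Sc S show False by (cases c) auto
qed

lemma lower:
  assumes "tensor_decomp (sym_matrices :: (complex^'n::finite^'n) set) UNIV (\<lambda>A v. A *v v) r"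
  shows "card (Pset :: 'n set set) \<le> r"
proof -
  obtain a b w where H: "\<And>A v. A \<in> (sym_matrices :: (complex^'n^'n) set) \<Longrightarrow>
      A *v v = (\<Sum>i<r. (mat_functional (a i) A * vec_functional (b i) v) *s w i)"
    using assms unfolding tensor_decomp_def by blast
  define M :: "nat \<Rightarrow> complex^'n^'n" where "M i = (\<chi> l m. w i $ l * b i $ m)" for i
  define J :: "nat \<Rightarrow> complex^'n^'n" where "J i = (\<chi> l m. \<i> * (w i $ l * b i $ m))" for i
  define S0 where "S0 = M ` {..<r} \<union> J ` {..<r}"
  have finS0: "finite S0" unfolding S0_def by simp
  have cardS0: "card S0 \<le> 2 * r"
  proof -
    have "card S0 \<le> card (M ` {..<r}) + card (J ` {..<r})" unfolding S0_def by (rule card_Un_le)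
    also have "\<dots> \<le> r + r" by (intro add_mono) (auto intro: card_image_le[THEN order_trans])
    finally show ?thesis by simp
  qed
  have inspan: "A \<in> span S0" if A: "A \<in> sym_matrices" for A
  proof -
    define c where "c i = mat_functional (a i) A" for i
    have "A = (\<Sum>i<r. Re (c i) *\<^sub>R M i + Im (c i) *\<^sub>R J i)"
    proof (subst vec_eq_iff, intro allI, subst vec_eq_iff, intro allI)
      fix l m
      have vf: "\<And>i. vec_functional (b i) (axis m 1) = b i $ m"
      proof -
        fix i
        have fe: "(\<lambda>l. b i $ l * axis m 1 $ l) = (\<lambda>l. if l = m then b i $ m else 0)"
          by (auto simp: axis_def)
        show "vec_functional (b i) (axis m 1) = b i $ m"
          unfolding vec_functional_def by (simp only: fe) simp
      qed
      have "A $ l $ m = (A *v axis m 1) $ l"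
        by (simp add: matrix_vector_mult_def axis_def sum_times_delta)
      also have "\<dots> = (\<Sum>i<r. c i * (w i $ l * b i $ m))"
        unfolding H[OF A] by (simp add: sum_component vf c_def mult.commute mult.left_commute)
      also have "\<dots> = (\<Sum>i<r. Re (c i) *\<^sub>R M i + Im (c i) *\<^sub>R J i) $ l $ m"
        by (simp add: sum_component M_def J_def re_im_combine)
      finally show "A $ l $ m = (\<Sum>i<r. Re (c i) *\<^sub>R M i + Im (c i) *\<^sub>R J i) $ l $ m" .
    qed
    also have "\<dots> \<in> span S0"
      by (intro real_vector.span_sum real_vector.span_add real_vector.span_scale real_vector.span_base)
         (auto simp: S0_def)
    finally show ?thesis .
  qed
  let ?T = "Gmat ` ((Pset :: 'n set set) \<times> UNIV)"
  have "?T \<subseteq> span S0" using inspan Gmat_sym by blast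
  then have "card ?T \<le> card S0"
    using real_vector.independent_span_bound[OF finS0 Gmat_indep] by blast
  moreover have "card ?T = 2 * card (Pset :: 'n set set)"
    by (subst card_image[OF Gmat_inj]) (simp add: card_cartesian_product)
  ultimately show ?thesis using cardS0 by simp
qed

theorem mainTheorem15:
  shows "tensor_rank (sym_matrices :: (complex^'n^'n) set) (UNIV :: (complex^'n) set)
           (\<lambda>A v. A *v v) = CARD('n) * (CARD('n) + 1) div 2"
proof -
  have "tensor_rank (sym_matrices :: (complex^'n^'n) set) (UNIV :: (complex^'n) set) (\<lambda>A v. A *v v)
      = card (Pset :: 'n set set)"
    unfolding tensor_rank_def
    by (rule Least_equality) (fact upper, erule lower)
  then show ?thesis by (simp add: card_Pset)
qed

end
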